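(* Let the unit circle $\partial\mathbb{B}^2=\{w\in\mathbb{C}:|w|=1\}$ be a reflecting mirror, and suppose light rays arrive from the right side (from a source at $+\infty$ on the real axis), travelling parallel to the real axis. Let $f=re^{i\theta}$ be the observation point, where $r>1$ and $0\le\theta\le\frac{\pi}{2}$. If a light ray of this kind is reflected at a point $w$ of the unit circle (obeying the law of reflection: angle of incidence equals angle of reflection with respect to the normal line through $0$ and $w$) and then reaches $f$, then $w$ is a solution of the equation $$ re^{-i\theta}w^4-w^3+w-re^{i\theta}=0. $$
   Context: The incoming ray at the reflection point $w$ lies on the horizontal line through $w$, coming from the direction of the point $w+1$; the law of reflection means that the oriented angle from the ray direction $w+1-w$ to the normal direction $0-w$ equals the oriented angle from $0-w$ to $f-w$. *)

theory Defs
  imports "HOL-Analysis.Analysis"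
begin

definition oriented_angle :: "complex \<Rightarrow> complex \<Rightarrow> real" where
  "oriented_angle a b = Arg (b / a)"

end

theory Submission
  imports Defs
begin

theorem theorem3p1:
  fixes r \<theta> :: real and w f :: complex
  assumes r: "r > 1"
    and \<theta>: "0 \<le> \<theta>" "\<theta> \<le> pi / 2"
    and f: "f = of_real r * exp (\<i> * of_real \<theta>)"
    and w: "cmod w = 1"
    and refl: "oriented_angle ((w + 1) - w) (0 - w) = oriented_angle (0 - w) (f - w)"
  shows "of_real r * exp (- \<i> * of_real \<theta>) * w ^ 4 - w ^ 3 + w
           - of_real r * exp (\<i> * of_real \<theta>) = 0"
proof -
  have w0: "w \<noteq> 0" using w by auto
  have cf: "cmod f = r" using f r by (simp add: norm_mult)
  have fw: "f \<noteq> w" using cf w r by auto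
  define q where "q = (f - w) / (- w)"
  have q0: "q \<noteq> 0" using fw w0 by (simp add: q_def)
  have A: "Arg (- w) = Arg q" using refl by (simp add: oriented_angle_def q_def)
  have e1: "- w = exp (\<i> * Arg (- w))" using Arg_eq[of "- w"] w0 w by simp
  have e2: "q = of_real (cmod q) * exp (\<i> * Arg q)" using Arg_eq[OF q0] .
  have qq: "q = of_real (cmod q) * (- w)" using e1 e2 A by metis
  define t where "t = cmod q"
  have fe: "f = w + of_real t * w^2"
  proof -
    have "f - w = q * (- w)" using w0 by (simp add: q_def)
    also have "\<dots> = of_real t * w^2" by (subst qq) (simp add: t_def power2_eq_square)
    finally show ?thesis by (simp add: algebra_simps)
  qed
  have cw: "cnj w * w = 1" using w by (metis complex_norm_square mult.commute of_real_1 power_one complex_mult_cnj)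
  have cf2: "of_real r * exp (- \<i> * of_real \<theta>) = cnj f"
    using f by (simp add: exp_cnj)
  have "cnj f = cnj w + of_real t * (cnj w)^2" using fe by simp
  hence "cnj f * w^4 = w^3 + of_real t * w^2"
    using cw by (simp add: algebra_simps power2_eq_square power4_eq_xxxx power3_eq_cube)
      (metis mult.assoc mult.commute mult.left_commute mult_1)
  hence "cnj f * w^4 - w^3 + w - f = 0" using fe by simp
  moreover have f2: "of_real r * exp (\<i> * of_real \<theta>) = f" using f by simp
  ultimately show ?thesis by (simp only: cf2 f2)
qed

end
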